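(* Let $X$ be a set and let $\mathscr{A}$ be a non-empty family of subsets of $X$ which is closed under finite intersections. Then $$\mathscr{L}_1(\mathscr{A}) := \{d \in \mathscr{P}(X) : d \text{ is bounded on } A \times A \text{ for some } A \in \mathscr{A}\}$$ is a Lipschitz structure for $X$.
   Context: $\mathscr{P}(X)$ denotes the family of all pseudo-metrics on $X$ (symmetric maps $d: X\times X \to [0,\infty)$ satisfying the triangle inequality and vanishing on the whole diagonal). A Lipschitz structure for $X$ is a non-empty family $\mathscr{L}$ of pseudo-metrics on $X$ such that: (L1) if $d$ is a pseudo-metric on $X$ with $d \le d_1$ for some $d_1 \in \mathscr{L}$, then $d \in \mathscr{L}$; (L2) if $d \in \mathscr{L}$ then $\alpha d \in \mathscr{L}$ for every real $\alpha>0$; (L3) if $d_1,d_2 \in \mathscr{L}$ then $d_1 \vee d_2$ (pointwise maximum) belongs to $\mathscr{L}$. *)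

theory Defs
  imports Complex_Main
begin

text \<open>Pseudo-metrics on a set X, represented as real-valued functions on X \<times> X,
  extended by 0 outside X \<times> X (so that they are determined by their values on X \<times> X).\<close>

definition pseudo_metric_on :: "'a set \<Rightarrow> ('a \<Rightarrow> 'a \<Rightarrow> real) \<Rightarrow> bool" where
  "pseudo_metric_on X d \<longleftrightarrow>
     (\<forall>x y. (x \<notin> X \<or> y \<notin> X) \<longrightarrow> d x y = 0) \<and>
     (\<forall>x\<in>X. \<forall>y\<in>X. d x y \<ge> 0) \<and>
     (\<forall>x\<in>X. d x x = 0) \<and>
     (\<forall>x\<in>X. \<forall>y\<in>X. d x y = d y x) \<and>
     (\<forall>x\<in>X. \<forall>y\<in>X. \<forall>z\<in>X. d x z \<le> d x y + d y z)"

definition pseudo_metrics :: "'a set \<Rightarrow> ('a \<Rightarrow> 'a \<Rightarrow> real) set" where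
  "pseudo_metrics X = {d. pseudo_metric_on X d}"

definition lipschitz_structure :: "'a set \<Rightarrow> ('a \<Rightarrow> 'a \<Rightarrow> real) set \<Rightarrow> bool" where
  "lipschitz_structure X L \<longleftrightarrow>
     L \<noteq> {} \<and> L \<subseteq> pseudo_metrics X \<and>
     (\<forall>d d1. d \<in> pseudo_metrics X \<and> d1 \<in> L \<and> (\<forall>x\<in>X. \<forall>y\<in>X. d x y \<le> d1 x y) \<longrightarrow> d \<in> L) \<and>
     (\<forall>d\<in>L. \<forall>\<alpha>::real. \<alpha> > 0 \<longrightarrow> (\<lambda>x y. \<alpha> * d x y) \<in> L) \<and>
     (\<forall>d1\<in>L. \<forall>d2\<in>L. (\<lambda>x y. max (d1 x y) (d2 x y)) \<in> L)"

definition bounded_on_square :: "('a \<Rightarrow> 'a \<Rightarrow> real) \<Rightarrow> 'a set \<Rightarrow> bool" where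
  "bounded_on_square d A \<longleftrightarrow> (\<exists>M. \<forall>x\<in>A. \<forall>y\<in>A. d x y \<le> M)"

definition L1 :: "'a set \<Rightarrow> 'a set set \<Rightarrow> ('a \<Rightarrow> 'a \<Rightarrow> real) set" where
  "L1 X \<A> = {d \<in> pseudo_metrics X. \<exists>A\<in>\<A>. bounded_on_square d A}"

end

theory Submission
  imports Defs
begin

lemma pm_scale: "pseudo_metric_on X d \<Longrightarrow> a > 0 \<Longrightarrow> pseudo_metric_on X (\<lambda>x y. a * d x y)"
  unfolding pseudo_metric_on_def
  by (simp add: distrib_left[symmetric] mult_left_mono)

lemma max_tri: "(a::real) \<le> c + e \<Longrightarrow> b \<le> d + f \<Longrightarrow> max a b \<le> max c d + max e f"
  by (simp add: max_def)

lemma pm_max: "pseudo_metric_on X d1 \<Longrightarrow> pseudo_metric_on X d2 \<Longrightarrow>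
   pseudo_metric_on X (\<lambda>x y. max (d1 x y) (d2 x y))"
  unfolding pseudo_metric_on_def
proof (intro conjI ballI allI impI)
  fix x y z assume h: "(\<forall>x y. x \<notin> X \<or> y \<notin> X \<longrightarrow> d1 x y = 0) \<and>
    (\<forall>x\<in>X. \<forall>y\<in>X. 0 \<le> d1 x y) \<and> (\<forall>x\<in>X. d1 x x = 0) \<and>
    (\<forall>x\<in>X. \<forall>y\<in>X. d1 x y = d1 y x) \<and> (\<forall>x\<in>X. \<forall>y\<in>X. \<forall>z\<in>X. d1 x z \<le> d1 x y + d1 y z)"
   and g: "(\<forall>x y. x \<notin> X \<or> y \<notin> X \<longrightarrow> d2 x y = 0) \<and>
    (\<forall>x\<in>X. \<forall>y\<in>X. 0 \<le> d2 x y) \<and> (\<forall>x\<in>X. d2 x x = 0) \<and>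
    (\<forall>x\<in>X. \<forall>y\<in>X. d2 x y = d2 y x) \<and> (\<forall>x\<in>X. \<forall>y\<in>X. \<forall>z\<in>X. d2 x z \<le> d2 x y + d2 y z)"
  { assume "x \<notin> X \<or> y \<notin> X" thus "max (d1 x y) (d2 x y) = 0" using h g by auto }
  { assume "x \<in> X" "y \<in> X" thus "0 \<le> max (d1 x y) (d2 x y)" using h by (simp add: le_max_iff_disj) }
  { assume "x \<in> X" thus "max (d1 x x) (d2 x x) = 0" using h g by auto }
  { assume "x \<in> X" "y \<in> X" thus "max (d1 x y) (d2 x y) = max (d1 y x) (d2 y x)" using h g by auto }
  { assume a: "x \<in> X" "y \<in> X" "z \<in> X"
    have "d1 x z \<le> d1 x y + d1 y z" "d2 x z \<le> d2 x y + d2 y z" using a h g by auto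
    thus "max (d1 x z) (d2 x z) \<le> max (d1 x y) (d2 x y) + max (d1 y z) (d2 y z)"
      by (rule max_tri) }
qed

theorem theorem3p1:
  fixes X :: "'a set" and \<A> :: "'a set set"
  assumes "\<A> \<noteq> {}"
    and "\<forall>A\<in>\<A>. A \<subseteq> X"
    and "\<forall>A\<in>\<A>. \<forall>B\<in>\<A>. A \<inter> B \<in> \<A>"
  shows "lipschitz_structure X (L1 X \<A>)"
  unfolding lipschitz_structure_def
proof (intro conjI ballI allI impI)
  obtain A0 where A0: "A0 \<in> \<A>" using assms(1) by auto
  have "pseudo_metric_on X (\<lambda>x y. 0)" unfolding pseudo_metric_on_def by simp
  moreover have "bounded_on_square (\<lambda>x y. 0) A0" unfolding bounded_on_square_def by auto
  ultimately have "(\<lambda>x y. 0) \<in> L1 X \<A>"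
    unfolding L1_def pseudo_metrics_def using A0 by blast
  thus "L1 X \<A> \<noteq> {}" by auto
  show "L1 X \<A> \<subseteq> pseudo_metrics X" unfolding L1_def by auto
next
  fix d d1 assume h: "d \<in> pseudo_metrics X \<and> d1 \<in> L1 X \<A> \<and> (\<forall>x\<in>X. \<forall>y\<in>X. d x y \<le> d1 x y)"
  then obtain A M where A: "A \<in> \<A>" "\<forall>x\<in>A. \<forall>y\<in>A. d1 x y \<le> M"
    unfolding L1_def bounded_on_square_def by auto
  have "\<forall>x\<in>A. \<forall>y\<in>A. d x y \<le> M"
  proof (intro ballI)
    fix x y assume xy: "x \<in> A" "y \<in> A"
    hence "x \<in> X" "y \<in> X" using A(1) assms(2) by auto
    hence "d x y \<le> d1 x y" using h by blast
    also have "\<dots> \<le> M" using A(2) xy by blast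
    finally show "d x y \<le> M" .
  qed
  thus "d \<in> L1 X \<A>" using h A unfolding L1_def bounded_on_square_def by auto
next
  fix d and a :: real assume d: "d \<in> L1 X \<A>" and a: "a > 0"
  then obtain A M where A: "A \<in> \<A>" "\<forall>x\<in>A. \<forall>y\<in>A. d x y \<le> M"
    and pm: "pseudo_metric_on X d"
    unfolding L1_def bounded_on_square_def pseudo_metrics_def by auto
  have "\<forall>x\<in>A. \<forall>y\<in>A. a * d x y \<le> a * M" using A a by auto
  thus "(\<lambda>x y. a * d x y) \<in> L1 X \<A>" using A pm_scale[OF pm a]
    unfolding L1_def bounded_on_square_def pseudo_metrics_def by auto
next
  fix d1 d2 assume d1: "d1 \<in> L1 X \<A>" and d2: "d2 \<in> L1 X \<A>"
  then obtain A M where A: "A \<in> \<A>" "\<forall>x\<in>A. \<forall>y\<in>A. d1 x y \<le> M"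
    and pm1: "pseudo_metric_on X d1"
    unfolding L1_def bounded_on_square_def pseudo_metrics_def by auto
  obtain B N where B: "B \<in> \<A>" "\<forall>x\<in>B. \<forall>y\<in>B. d2 x y \<le> N"
    and pm2: "pseudo_metric_on X d2"
    using d2 unfolding L1_def bounded_on_square_def pseudo_metrics_def by auto
  have AB: "A \<inter> B \<in> \<A>" using assms(3) A B by auto
  have "\<forall>x\<in>A \<inter> B. \<forall>y\<in>A \<inter> B. max (d1 x y) (d2 x y) \<le> max M N" using A B
  proof (intro ballI)
    fix x y assume "x \<in> A \<inter> B" "y \<in> A \<inter> B"
    hence "d1 x y \<le> M" "d2 x y \<le> N" using A(2) B(2) by auto
    thus "max (d1 x y) (d2 x y) \<le> max M N" by (rule max.mono)
  qed
  thus "(\<lambda>x y. max (d1 x y) (d2 x y)) \<in> L1 X \<A>" using AB pm_max[OF pm1 pm2]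
    unfolding L1_def bounded_on_square_def pseudo_metrics_def by blast
qed

end
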